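(* Let $\mathcal U$ be an update family and let $u^*\in\mathcal S$ be a rational direction with $\alpha^-(u^* )=\infty$. Then there exists $u_0\in S^1\setminus\{u^*\}$ such that the closed arc $[u_0,u^*]$ (the short arc between them) is contained in $\mathcal S$, $\alpha^-(u)=\infty$ for all rational $u\in[u_0,u^*]$, and for every $u\in[u_0,u^*]$ and all $a,b\in\mathbb Z^2$ for which $$J=\big(\mathbb H_{u_0}(a)\cap\mathbb H_{u^*}(b)\big)\setminus\mathbb H_u$$ is non-empty, the set $\mathbb H_u\cup J$ is closed, i.e. $[\mathbb H_u\cup J]=\mathbb H_u\cup J$.
   Context: Update family $\mathcal U$: finite collection of finite subsets of $\mathbb Z^2\setminus\{0\}$; $A_{t+1}=A_t\cup\{x:x+X\subset A_t,\ X\in\mathcal U\}$, $[A]=\bigcup_tA_t$. $\mathbb H_u(a)=\{x\in\mathbb Z^2:\langle x-a,u\rangle<0\}$, $\mathbb H_u=\mathbb H_u(0)$; $u$ stable if $[\mathbb H_u]=\mathbb H_u$, $\mathcal S$ the stable set. For rational $u$ (rational or infinite slope), $\ell_u^-$ is the origin together with the sites of $\{x:\langle x,u\rangle=0\}$ to the left of the origin looking in direction $u$, and $\alpha^-(u)$ is the minimal cardinality of $Z\subset\mathbb Z^2$ such that $[\mathbb H_u\cup Z]$ contains infinitely many sites of $\ell_u^-$ ($\infty$ if none exists). A set of the form $J$ above is called a $u$-iceberg. *)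

theory Defs
  imports Main "HOL-Library.Extended_Nat"
begin

type_synonym site = "int \<times> int"
type_synonym dir = "real \<times> real"

definition sadd :: "site \<Rightarrow> site \<Rightarrow> site" where
  "sadd x y = (fst x + fst y, snd x + snd y)"

definition update_family :: "site set set \<Rightarrow> bool" where
  "update_family U \<longleftrightarrow> finite U \<and> (\<forall>X\<in>U. finite X \<and> (0,0) \<notin> X)"

definition upd_step :: "site set set \<Rightarrow> site set \<Rightarrow> site set" where
  "upd_step U A = A \<union> {x. \<exists>X\<in>U. sadd x ` X \<subseteq> A}"

definition span :: "site set set \<Rightarrow> site set \<Rightarrow> site set" where
  "span U A = (\<Union>t. (upd_step U ^^ t) A)"

definition S1 :: "dir set" where
  "S1 = {u. (fst u)\<^sup>2 + (snd u)\<^sup>2 = 1}"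

definition ip :: "site \<Rightarrow> dir \<Rightarrow> real" where
  "ip x u = of_int (fst x) * fst u + of_int (snd x) * snd u"

definition halfplane :: "dir \<Rightarrow> site \<Rightarrow> site set" where
  "halfplane u a = {x. ip (fst x - fst a, snd x - snd a) u < 0}"

definition stable_set :: "site set set \<Rightarrow> dir set" where
  "stable_set U = {u \<in> S1. span U (halfplane u (0,0)) = halfplane u (0,0)}"

definition rational_dir :: "dir \<Rightarrow> bool" where
  "rational_dir u \<longleftrightarrow> u \<in> S1 \<and> (fst u = 0 \<or> snd u / fst u \<in> \<rat>)"

text \<open>ell_u^-: origin together with the sites on the line <x,u> = 0 lying to the left
  of the origin when looking in direction u (left = rotation of u by +90 degrees,
  i.e. the vector (- snd u, fst u)).\<close>
definition ell_minus :: "dir \<Rightarrow> site set" where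
  "ell_minus u = {x. ip x u = 0 \<and> ip x (- snd u, fst u) \<ge> 0}"

text \<open>alpha^-(u): minimal size of a (finite) Z with [H_u \<union> Z] containing infinitely
  many sites of ell_u^-; infinity if no such Z exists (Inf of the empty set).\<close>
definition alpha_minus :: "site set set \<Rightarrow> dir \<Rightarrow> enat" where
  "alpha_minus U u = (INF Z \<in> {Z. finite Z \<and> infinite (span U (halfplane u (0,0) \<union> Z) \<inter> ell_minus u)}.
      enat (card Z))"

text \<open>Closed short arc between two non-antipodal unit vectors.\<close>
definition arc :: "dir \<Rightarrow> dir \<Rightarrow> dir set" where
  "arc v w = {u \<in> S1. \<exists>s t. s \<ge> 0 \<and> t \<ge> 0 \<and> u = (s * fst v + t * fst w, s * snd v + t * snd w)}"

end

theory Submission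
  imports Defs Complex_Main
begin

lemma upd_sup: "A \<subseteq> upd_step U A" by (auto simp: upd_step_def)

lemma iter_mono: "m \<le> n \<Longrightarrow> (upd_step U ^^ m) A \<subseteq> (upd_step U ^^ n) A"
  by (rule lift_Suc_mono_le[of "\<lambda>t. (upd_step U ^^ t) A"]) (auto simp: upd_sup)

lemma subset_span: "A \<subseteq> span U A"
  unfolding span_def by (metis UNIV_I UN_upper funpow_0)

lemma span_mono: "A \<subseteq> B \<Longrightarrow> span U A \<subseteq> span U B"
proof -
  assume "A \<subseteq> B"
  have "(upd_step U ^^ t) A \<subseteq> (upd_step U ^^ t) B" for t
  proof (induction t)
    case 0 then show ?case using \<open>A \<subseteq> B\<close> by simp
  next
    case (Suc t) then show ?case by (auto simp: upd_step_def)
  qed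
  then show ?thesis unfolding span_def by blast
qed

lemma span_upd:
  assumes "finite X" "X \<in> U" "sadd x ` X \<subseteq> span U A"
  shows "x \<in> span U A"
proof -
  have "\<forall>y\<in>X. \<exists>t. sadd x y \<in> (upd_step U ^^ t) A" using assms(3) unfolding span_def by blast
  then obtain tf where tf: "\<forall>y\<in>X. sadd x y \<in> (upd_step U ^^ tf y) A" by metis
  define T where "T = Max (insert 0 (tf ` X))"
  have "\<forall>y\<in>X. tf y \<le> T" using assms(1) unfolding T_def by auto
  then have "sadd x ` X \<subseteq> (upd_step U ^^ T) A" using tf iter_mono by blast
  then have "x \<in> (upd_step U ^^ Suc T) A" using assms(2) by (auto simp: upd_step_def)
  then show ?thesis unfolding span_def by blast
qed

lemma closed_span:
  assumes "\<And>x X. X \<in> U \<Longrightarrow> sadd x ` X \<subseteq> A \<Longrightarrow> x \<in> A"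
  shows "span U A = A"
proof -
  have "upd_step U A = A" using assms by (auto simp: upd_step_def)
  then have "(upd_step U ^^ t) A = A" for t by (induction t) auto
  then show ?thesis unfolding span_def by simp
qed

lemma ip_add: "ip (sadd x y) v = ip x v + ip y v"
  by (simp add: ip_def sadd_def algebra_simps)

lemma hp_iff: "x \<in> halfplane u a \<longleftrightarrow> ip x u < ip a u"
  by (simp add: halfplane_def ip_def algebra_simps)

definition FF :: "real \<Rightarrow> real \<Rightarrow> real \<times> real \<Rightarrow> real" where
  "FF al be z = al * fst z + be * snd z"
definition GG :: "real \<Rightarrow> real \<Rightarrow> real \<times> real \<Rightarrow> real" where
  "GG al be z = - be * fst z + al * snd z"
definition rs :: "site \<Rightarrow> real \<times> real" where
  "rs x = (real_of_int (fst x), real_of_int (snd x))"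

lemma ip_FG: assumes "al\<^sup>2 + be\<^sup>2 = 1"
  shows "ip x v = FF al be (rs x) * FF al be v + GG al be (rs x) * GG al be v"
proof -
  have "FF al be (rs x) * FF al be v + GG al be (rs x) * GG al be v
      = (al\<^sup>2 + be\<^sup>2) * (of_int (fst x) * fst v + of_int (snd x) * snd v)"
    by (simp add: FF_def GG_def rs_def power2_eq_square algebra_simps)
  then show ?thesis using assms by (simp add: ip_def)
qed

lemma norm_FG: assumes "al\<^sup>2 + be\<^sup>2 = 1"
  shows "(fst z)\<^sup>2 + (snd z)\<^sup>2 = (FF al be z)\<^sup>2 + (GG al be z)\<^sup>2"
proof -
  have "(FF al be z)\<^sup>2 + (GG al be z)\<^sup>2 = (al\<^sup>2 + be\<^sup>2) * ((fst z)\<^sup>2 + (snd z)\<^sup>2)"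
    by (simp add: FF_def GG_def power2_eq_square algebra_simps)
  then show ?thesis using assms by simp
qed

lemma coord_FG: assumes "al\<^sup>2 + be\<^sup>2 = 1"
  shows "fst z = al * FF al be z - be * GG al be z" "snd z = be * FF al be z + al * GG al be z"
proof -
  have "al * FF al be z - be * GG al be z = (al\<^sup>2 + be\<^sup>2) * fst z"
    by (simp add: FF_def GG_def power2_eq_square algebra_simps)
  then show "fst z = al * FF al be z - be * GG al be z" using assms by simp
  have "be * FF al be z + al * GG al be z = (al\<^sup>2 + be\<^sup>2) * snd z"
    by (simp add: FF_def GG_def power2_eq_square algebra_simps)
  then show "snd z = be * FF al be z + al * GG al be z" using assms by simp
qed


lemma ipF: "ip x (al,be) = FF al be (rs x)" by (simp add: ip_def FF_def rs_def)
lemma ipG: "ip x (-be,al) = GG al be (rs x)" by (simp add: ip_def GG_def rs_def)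

lemma FG_add: "FF al be (rs (sadd x y)) = FF al be (rs x) + FF al be (rs y)"
  "GG al be (rs (sadd x y)) = GG al be (rs x) + GG al be (rs y)"
  by (simp_all add: FF_def GG_def rs_def sadd_def algebra_simps)

lemma abs_le1: assumes "al\<^sup>2 + be\<^sup>2 = (1::real)" shows "\<bar>al\<bar> \<le> 1" "\<bar>be\<bar> \<le> 1"
proof -
  have "al\<^sup>2 \<le> 1" "be\<^sup>2 \<le> 1" using assms zero_le_power2[of al] zero_le_power2[of be] by linarith+
  then show "\<bar>al\<bar> \<le> 1" "\<bar>be\<bar> \<le> 1" by (simp_all add: abs_square_le_1)
qed

lemma int_bound: "\<bar>real_of_int k\<bar> \<le> B \<Longrightarrow> k \<in> {-\<lceil>B\<rceil>..\<lceil>B\<rceil>}"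
  by (auto simp: abs_le_iff) (linarith+)

lemma bounded_finite:
  assumes "\<And>z. z \<in> S \<Longrightarrow> \<bar>real_of_int (fst z)\<bar> \<le> B \<and> \<bar>real_of_int (snd z)\<bar> \<le> B"
  shows "finite (S :: site set)"
proof (rule finite_subset)
  show "S \<subseteq> {-\<lceil>B\<rceil>..\<lceil>B\<rceil>} \<times> {-\<lceil>B\<rceil>..\<lceil>B\<rceil>}"
    using assms int_bound by (metis mem_Times_iff subsetI)
qed simp

lemma FG_zero: assumes "al\<^sup>2 + be\<^sup>2 = 1" "FF al be (rs y) = 0" "GG al be (rs y) = 0"
  shows "y = (0,0)"
proof -
  have "fst (rs y) = 0" "snd (rs y) = 0" using coord_FG[OF assms(1), of "rs y"] assms(2,3) by simp_all
  then show ?thesis by (cases y) (simp add: rs_def)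
qed

lemma good_from_alpha:
  assumes uf: "update_family U" and rd: "rational_dir (al,be)"
    and am: "alpha_minus U (al,be) = \<infinity>" and XU: "X \<in> U"
  shows "\<exists>y\<in>X. FF al be (rs y) > 0 \<or> (FF al be (rs y) = 0 \<and> GG al be (rs y) > 0)"
proof (rule ccontr)
  let ?f = "\<lambda>y. FF al be (rs y)" and ?g = "\<lambda>y. GG al be (rs y)"
  assume nt: "\<not> ?thesis"
  have n1: "al\<^sup>2 + be\<^sup>2 = 1" using rd by (simp add: rational_dir_def S1_def)
  have finX: "finite X" and X0: "(0,0) \<notin> X" using uf XU by (auto simp: update_family_def)
  have bad: "\<forall>y\<in>X. ?f y < 0 \<or> (?f y = 0 \<and> ?g y < 0)"
  proof
    fix y assume yX: "y \<in> X"
    with nt have "?f y \<le> 0" "?f y = 0 \<longrightarrow> ?g y \<le> 0" by auto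
    moreover have "\<not> (?f y = 0 \<and> ?g y = 0)" using FG_zero[OF n1] yX X0 by blast
    ultimately show "?f y < 0 \<or> (?f y = 0 \<and> ?g y < 0)" by linarith
  qed
  define M where "M = Max (insert 0 ((\<lambda>y. \<bar>?g y\<bar>) ` X))"
  have M: "\<And>y. y \<in> X \<Longrightarrow> \<bar>?g y\<bar> \<le> M" using finX unfolding M_def by auto
  define Z where "Z = {z. ?f z = 0 \<and> - M \<le> ?g z \<and> ?g z < 0}"
  have finZ: "finite Z"
  proof (rule bounded_finite[where B = M])
    fix z assume "z \<in> Z"
    then have h: "?f z = 0" "\<bar>?g z\<bar> \<le> M" unfolding Z_def by auto
    have c: "real_of_int (fst z) = - be * ?g z" "real_of_int (snd z) = al * ?g z"
      using coord_FG[OF n1, of "rs z"] h(1) by (simp_all add: rs_def)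
    have "\<bar>be * ?g z\<bar> \<le> M" "\<bar>al * ?g z\<bar> \<le> M" using abs_le1[OF n1] h(2)
      by (simp_all add: abs_mult mult_le_one order_trans[OF mult_right_mono[of _ 1]])
    then show "\<bar>real_of_int (fst z)\<bar> \<le> M \<and> \<bar>real_of_int (snd z)\<bar> \<le> M" using c by simp
  qed
  let ?H = "halfplane (al,be) (0,0)"
  have nrm: "real_of_int ((fst x)\<^sup>2 + (snd x)\<^sup>2) = (?f x)\<^sup>2 + (?g x)\<^sup>2" for x
    using norm_FG[OF n1, of "rs x"] by (simp add: rs_def)
  have main: "x \<in> span U (?H \<union> Z)" if "?f x = 0" "?g x \<ge> 0" for x
    using that
  proof (induction "nat ((fst x)\<^sup>2 + (snd x)\<^sup>2)" arbitrary: x rule: less_induct)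
    case less
    have "sadd x ` X \<subseteq> span U (?H \<union> Z)"
    proof
      fix w assume "w \<in> sadd x ` X"
      then obtain y where yX: "y \<in> X" and w: "w = sadd x y" by auto
      have fw: "?f w = ?f y" "?g w = ?g x + ?g y" using FG_add less.prems w by simp_all
      show "w \<in> span U (?H \<union> Z)"
      proof (cases "?f y < 0")
        case True
        then have "w \<in> ?H" using fw by (simp add: hp_iff ipF FF_def rs_def)
        then show ?thesis using subset_span by blast
      next
        case False
        then have fy: "?f y = 0" "?g y < 0" using bad yX by auto
        show ?thesis
        proof (cases "?g w < 0")
          case True
          have "- M \<le> ?g y" using M[OF yX] by linarith
          then have "w \<in> Z" using True fw fy less.prems unfolding Z_def by auto
          then show ?thesis using subset_span by blast
        next
          case False
          have "(?g w)\<^sup>2 < (?g x)\<^sup>2" using False fw fy less.prems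
            by (intro power_strict_mono) auto
          then have "real_of_int ((fst w)\<^sup>2 + (snd w)\<^sup>2) < real_of_int ((fst x)\<^sup>2 + (snd x)\<^sup>2)"
            using nrm[of w] nrm[of x] fw fy less.prems by simp
          then have i: "(fst w)\<^sup>2 + (snd w)\<^sup>2 < (fst x)\<^sup>2 + (snd x)\<^sup>2"
            by (simp only: of_int_less_iff)
          have "0 \<le> (fst w)\<^sup>2 + (snd w)\<^sup>2" by simp
          then have "nat ((fst w)\<^sup>2 + (snd w)\<^sup>2) < nat ((fst x)\<^sup>2 + (snd x)\<^sup>2)"
            using i by linarith
          then show ?thesis using less.hyps[of w] fw fy False by simp
        qed
      qed
    qed
    then show ?case using span_upd[OF _ XU] finX by blast
  qed
  obtain e where e0: "e \<noteq> (0,0)" and fe: "?f e = 0"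
  proof (cases "al = 0")
    case True
    then show ?thesis using that[of "(1,0)"] by (simp add: FF_def rs_def)
  next
    case False
    then have "be / al \<in> \<rat>" using rd by (simp add: rational_dir_def)
    then obtain r s where s: "s > 0" and q: "be / al = of_int r / of_int s" by (auto elim: Rats_cases')
    have "be * of_int s = al * of_int r" using q False s by (simp add: field_simps)
    then show ?thesis using that[of "(-r, s)"] s by (simp add: FF_def rs_def algebra_simps)
  qed
  have ge: "?g e \<noteq> 0" using FG_zero[OF n1] e0 fe by blast
  define e' where "e' = (if ?g e > 0 then e else (- fst e, - snd e))"
  have e'0: "e' \<noteq> (0,0)" using e0 unfolding e'_def by (cases e) auto
  have fe': "?f e' = 0" and ge': "?g e' > 0" using fe ge unfolding e'_def
    by (auto simp: FF_def GG_def rs_def algebra_simps)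
  define m where "m = (\<lambda>n::nat. (int n * fst e', int n * snd e'))"
  have fm: "?f (m n) = real n * ?f e'" "?g (m n) = real n * ?g e'" for n
    by (simp_all add: m_def FF_def GG_def rs_def algebra_simps)
  have inj: "inj m"
  proof
    fix a b assume "m a = m b"
    then have "real a * ?g e' = real b * ?g e'" using fm by metis
    then show "a = b" using ge' by simp
  qed
  have "range m \<subseteq> span U (?H \<union> Z) \<inter> ell_minus (al,be)"
  proof
    fix w assume "w \<in> range m"
    then obtain n where w: "w = m n" by auto
    have "?f w = 0" "?g w \<ge> 0" using fm fe' ge' w by simp_all
    then show "w \<in> span U (?H \<union> Z) \<inter> ell_minus (al,be)"
      using main by (auto simp: ell_minus_def ip_def FF_def GG_def rs_def algebra_simps)
  qed
  then have "infinite (span U (?H \<union> Z) \<inter> ell_minus (al,be))"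
    using inj infinite_iff_countable_subset by (meson finite_imageD finite_subset infinite_UNIV_nat)
  then have "alpha_minus U (al,be) \<le> enat (card Z)"
    unfolding alpha_minus_def using finZ by (intro INF_lower) auto
  then show False using am by simp
qed


lemma kappa_exists:
  assumes "finite Y"
  shows "\<exists>\<kappa>>0. \<forall>y\<in>Y. FF al be (rs y) > 0 \<longrightarrow> \<kappa> * \<bar>GG al be (rs y)\<bar> \<le> FF al be (rs y)"
  using assms
proof (induction Y rule: finite_induct)
  case empty then show ?case by (intro exI[of _ 1]) auto
next
  case (insert y Y)
  then obtain k where k: "k > 0" "\<forall>y\<in>Y. FF al be (rs y) > 0 \<longrightarrow> k * \<bar>GG al be (rs y)\<bar> \<le> FF al be (rs y)" by blast
  let ?f = "FF al be (rs y)" and ?g = "GG al be (rs y)"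
  show ?case
  proof (cases "?f > 0")
    case False then show ?thesis using k by auto
  next
    case True
    define k' where "k' = min k (?f / (\<bar>?g\<bar> + 1))"
    have k'0: "k' > 0" using k True by (simp add: k'_def)
    have "k' * \<bar>?g\<bar> \<le> (?f / (\<bar>?g\<bar> + 1)) * (\<bar>?g\<bar> + 1)"
      using k'0 unfolding k'_def by (intro mult_mono) auto
    also have "\<dots> = ?f" by simp
    finally have a: "k' * \<bar>?g\<bar> \<le> ?f" .
    have b: "\<forall>z\<in>Y. FF al be (rs z) > 0 \<longrightarrow> k' * \<bar>GG al be (rs z)\<bar> \<le> FF al be (rs z)"
    proof (intro ballI impI)
      fix z assume "z \<in> Y" "FF al be (rs z) > 0"
      then have "k * \<bar>GG al be (rs z)\<bar> \<le> FF al be (rs z)" using k by auto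
      moreover have "k' * \<bar>GG al be (rs z)\<bar> \<le> k * \<bar>GG al be (rs z)\<bar>"
        unfolding k'_def by (intro mult_right_mono) auto
      ultimately show "k' * \<bar>GG al be (rs z)\<bar> \<le> FF al be (rs z)" by linarith
    qed
    show ?thesis using a b k'0 by (intro exI[of _ k']) auto
  qed
qed

definition cone :: "real \<Rightarrow> real \<Rightarrow> real \<Rightarrow> dir set" where
  "cone al be k = {v. 0 \<le> GG al be v \<and> GG al be v \<le> k * FF al be v}"

definition goodk :: "real \<Rightarrow> real \<Rightarrow> real \<Rightarrow> site \<Rightarrow> bool" where
  "goodk al be k y \<longleftrightarrow> (FF al be (rs y) > 0 \<and> k * \<bar>GG al be (rs y)\<bar> \<le> FF al be (rs y))
      \<or> (FF al be (rs y) = 0 \<and> GG al be (rs y) > 0)"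

lemma good_ip:
  assumes n1: "al\<^sup>2 + be\<^sup>2 = 1" and k: "k > 0" and g: "goodk al be k y" and v: "v \<in> cone al be k"
  shows "ip y v \<ge> 0"
proof -
  let ?f = "FF al be (rs y)" and ?g = "GG al be (rs y)" and ?F = "FF al be v" and ?G = "GG al be v"
  have G: "0 \<le> ?G" "?G \<le> k * ?F" using v by (auto simp: cone_def)
  have F: "0 \<le> ?F" using G k by (meson dual_order.trans zero_le_mult_iff not_le less_imp_le)
  have ip: "ip y v = ?f * ?F + ?g * ?G" using ip_FG[OF n1] .
  show ?thesis
  proof (cases "?f > 0 \<and> k * \<bar>?g\<bar> \<le> ?f")
    case True
    have "- \<bar>?g\<bar> \<le> ?g" by simp
    then have "?g * ?G \<ge> - \<bar>?g\<bar> * ?G" using G(1) by (rule mult_right_mono)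
    moreover have "\<bar>?g\<bar> * ?G \<le> \<bar>?g\<bar> * (k * ?F)" using G by (simp add: mult_left_mono)
    moreover have "(k * \<bar>?g\<bar>) * ?F \<le> ?f * ?F" using True F by (simp add: mult_right_mono)
    ultimately show ?thesis using ip by (simp add: algebra_simps)
  next
    case False
    then have "?f = 0" "?g > 0" using g by (auto simp: goodk_def)
    then show ?thesis using ip G by simp
  qed
qed

lemma closed_cone:
  assumes n1: "al\<^sup>2 + be\<^sup>2 = 1" and k: "k > 0"
    and hg: "\<forall>X\<in>U. \<exists>y\<in>X. goodk al be k y"
    and v: "v \<in> cone al be k" and w1: "w1 \<in> cone al be k" and w2: "w2 \<in> cone al be k"
  shows "span U (halfplane v (0,0) \<union> (halfplane w1 a \<inter> halfplane w2 b))
       = halfplane v (0,0) \<union> (halfplane w1 a \<inter> halfplane w2 b)"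
proof (rule closed_span)
  fix x X assume XU: "X \<in> U" and sub: "sadd x ` X \<subseteq> halfplane v (0,0) \<union> (halfplane w1 a \<inter> halfplane w2 b)"
  show "x \<in> halfplane v (0,0) \<union> (halfplane w1 a \<inter> halfplane w2 b)"
  proof (rule ccontr)
    assume nx: "x \<notin> halfplane v (0,0) \<union> (halfplane w1 a \<inter> halfplane w2 b)"
    obtain y where yX: "y \<in> X" and gy: "goodk al be k y" using hg XU by blast
    have i: "ip y v \<ge> 0" "ip y w1 \<ge> 0" "ip y w2 \<ge> 0" using good_ip[OF n1 k gy] v w1 w2 by auto
    have "sadd x y \<in> halfplane v (0,0) \<union> (halfplane w1 a \<inter> halfplane w2 b)" using sub yX by blast
    then show False using nx i by (auto simp: hp_iff ip_add)
  qed
qed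


lemma bound_line:
  fixes P Q k Fx Gx K :: real
  assumes P: "P > 0" and Q: "Q > 0" and PQ: "2 * Q \<le> k * P"
    and e1: "Fx * P + Gx * Q = 0" and e2: "Gx * P - Fx * Q \<ge> 0" and e3: "Fx + k * Gx < K"
  shows "\<bar>Fx\<bar> \<le> K \<and> \<bar>Gx\<bar> \<le> K * P / Q"
proof -
  have gq: "Gx * Q = - Fx * P" using e1 by linarith
  have "(Gx * P - Fx * Q) * Q \<ge> 0" using e2 Q by simp
  have g2: "Gx * (P * Q) = - (Fx * (P * P))"
  proof -
    have "Gx * (P * Q) = (Gx * Q) * P" by (simp add: algebra_simps)
    also have "\<dots> = - (Fx * (P * P))" using gq by (simp add: algebra_simps)
    finally show ?thesis .
  qed
  have "(Gx * P - Fx * Q) * Q = Gx * (P * Q) - Fx * (Q * Q)" by (simp add: algebra_simps)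
  then have "- Fx * (P * P + Q * Q) \<ge> 0" using g2 \<open>(Gx * P - Fx * Q) * Q \<ge> 0\<close> by (simp add: algebra_simps)
  moreover have "P * P + Q * Q > 0" using P Q by (simp add: add_pos_pos)
  ultimately have F0: "Fx \<le> 0" by (simp add: mult_le_0_iff)
  have "(Fx + k * Gx) * Q < K * Q" using e3 Q by simp
  moreover have "(Fx + k * Gx) * Q = Fx * (Q - k * P)"
  proof -
    have "(Fx + k * Gx) * Q = Fx * Q + k * (Gx * Q)" by (simp add: algebra_simps)
    also have "\<dots> = Fx * (Q - k * P)" using gq by (simp add: algebra_simps)
    finally show ?thesis .
  qed
  ultimately have h: "Fx * (Q - k * P) < K * Q" by simp
  have "Fx * (Q - k * P) \<ge> Fx * (- Q)" using F0 PQ by (intro mult_left_mono_neg) auto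
  then have "- Fx * Q < K * Q" using h by simp
  then have "(- Fx) * Q < K * Q" by simp
  then have "- Fx < K" using Q by (simp only: mult_less_cancel_right)
  then have aF: "\<bar>Fx\<bar> \<le> K" using F0 by simp
  have "\<bar>Gx\<bar> * Q = \<bar>Fx\<bar> * P" using gq P Q by (metis abs_minus_cancel abs_mult abs_of_pos mult_minus_left)
  then have "\<bar>Gx\<bar> = \<bar>Fx\<bar> * P / Q" using Q by (simp add: field_simps)
  also have "\<dots> \<le> K * P / Q" using aF P Q by (intro divide_right_mono mult_right_mono) auto
  finally show ?thesis using aF by simp
qed

lemma exists_far:
  assumes "finite Z" "w \<noteq> (0,0)"
  shows "\<exists>a. \<forall>z\<in>Z. ip z w < ip a w"
proof -
  define M where "M = Max (insert 0 ((\<lambda>z. ip z w) ` Z))"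
  have M: "\<forall>z\<in>Z. ip z w \<le> M" using assms(1) unfolding M_def by auto
  have pos: "\<bar>fst w\<bar> + \<bar>snd w\<bar> > 0" using assms(2) by (cases w) auto
  obtain n :: nat where n: "M < real n * (\<bar>fst w\<bar> + \<bar>snd w\<bar>)"
    using pos ex_less_of_nat_mult by blast
  define s1 :: int where "s1 = (if fst w \<ge> 0 then 1 else -1)"
  define s2 :: int where "s2 = (if snd w \<ge> 0 then 1 else -1)"
  have "ip (int n * s1, int n * s2) w = real n * (\<bar>fst w\<bar> + \<bar>snd w\<bar>)"
    by (simp add: ip_def s1_def s2_def algebra_simps)
  then show ?thesis using M n by (intro exI[of _ "(int n * s1, int n * s2)"]) force
qed


lemma FF_lin: "FF al be (s * fst x + t * fst y, s * snd x + t * snd y) = s * FF al be x + t * FF al be y"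
  by (simp add: FF_def algebra_simps)
lemma GG_lin: "GG al be (s * fst x + t * fst y, s * snd x + t * snd y) = s * GG al be x + t * GG al be y"
  by (simp add: GG_def algebra_simps)

theorem mainTheorem13:
  fixes U :: "site set set" and ustar :: dir
  assumes "update_family U"
    and "rational_dir ustar"
    and "ustar \<in> stable_set U"
    and "alpha_minus U ustar = \<infinity>"
  shows "\<exists>u0\<in>S1. u0 \<noteq> ustar \<and> u0 \<noteq> (- fst ustar, - snd ustar)
     \<and> arc u0 ustar \<subseteq> stable_set U
     \<and> (\<forall>u\<in>arc u0 ustar. rational_dir u \<longrightarrow> alpha_minus U u = \<infinity>)
     \<and> (\<forall>u\<in>arc u0 ustar. \<forall>a b.
          (halfplane u0 a \<inter> halfplane ustar b) - halfplane u (0,0) \<noteq> {} \<longrightarrow>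
          span U (halfplane u (0,0) \<union> ((halfplane u0 a \<inter> halfplane ustar b) - halfplane u (0,0)))
            = halfplane u (0,0) \<union> ((halfplane u0 a \<inter> halfplane ustar b) - halfplane u (0,0)))"
proof -
  obtain al be where us: "ustar = (al, be)" by (cases ustar)
  have n1: "al\<^sup>2 + be\<^sup>2 = 1" using assms(2) us by (simp add: rational_dir_def S1_def)
  have uf: "update_family U" by fact
  have finY: "finite (\<Union>U)" using uf by (auto simp: update_family_def)
  obtain k where k0: "k > 0" and kp: "\<forall>y\<in>\<Union>U. FF al be (rs y) > 0 \<longrightarrow> k * \<bar>GG al be (rs y)\<bar> \<le> FF al be (rs y)"
    using kappa_exists[OF finY] by blast
  have hg: "\<forall>X\<in>U. \<exists>y\<in>X. goodk al be k y"
  proof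
    fix X assume XU: "X \<in> U"
    obtain y where "y \<in> X" "FF al be (rs y) > 0 \<or> (FF al be (rs y) = 0 \<and> GG al be (rs y) > 0)"
      using good_from_alpha[OF uf assms(2)[unfolded us] assms(4)[unfolded us] XU] by blast
    then show "\<exists>y\<in>X. goodk al be k y" using kp XU unfolding goodk_def by blast
  qed
  define t where "t = min (1/2) (k/8)"
  have t0: "t > 0" "t \<le> 1/2" "t \<le> k/8" using k0 by (auto simp: t_def)
  define c where "c = (1 - t\<^sup>2) / (1 + t\<^sup>2)"
  define d where "d = 2 * t / (1 + t\<^sup>2)"
  have tt: "t\<^sup>2 \<le> 1/4"
  proof -
    have "t * t \<le> (1/2) * (1/2)" using t0 by (intro mult_mono) auto
    then show ?thesis by (simp add: power2_eq_square)
  qed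
  have tp: "1 + t\<^sup>2 > 0" by (simp add: add_pos_nonneg)
  have c0: "c > 0" using tt tp unfolding c_def by (intro divide_pos_pos) auto
  have d0: "d > 0" using t0 tp unfolding d_def by (intro divide_pos_pos) auto
  have cd1: "c\<^sup>2 + d\<^sup>2 = 1"
  proof -
    have num: "(1 - t\<^sup>2)\<^sup>2 + (2*t)\<^sup>2 = (1+t\<^sup>2)\<^sup>2" by (simp add: power2_eq_square algebra_simps)
    have "c\<^sup>2 + d\<^sup>2 = (1 - t\<^sup>2)\<^sup>2/(1+t\<^sup>2)\<^sup>2 + (2*t)\<^sup>2/(1+t\<^sup>2)\<^sup>2"
      unfolding c_def d_def by (simp only: power_divide)
    also have "\<dots> = ((1 - t\<^sup>2)\<^sup>2 + (2*t)\<^sup>2)/(1+t\<^sup>2)\<^sup>2" by (simp only: add_divide_distrib)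
    also have "\<dots> = (1+t\<^sup>2)\<^sup>2/(1+t\<^sup>2)\<^sup>2" by (simp only: num)
    also have "\<dots> = 1" using tp by simp
    finally show ?thesis .
  qed
  have dk: "2 * d \<le> k * c"
  proof -
    have "2 * (2 * t) \<le> k * (1 - t\<^sup>2)"
    proof -
      have "k * (3/4) \<le> k * (1 - t\<^sup>2)" using tt k0 by (intro mult_left_mono) auto
      moreover have "4 * t \<le> k * (3/4)" using t0 by linarith
      ultimately show ?thesis by linarith
    qed
    then have "(2 * (2 * t)) / (1 + t\<^sup>2) \<le> (k * (1 - t\<^sup>2)) / (1 + t\<^sup>2)"
      using tp by (intro divide_right_mono) auto
    moreover have "2 * d = (2 * (2 * t)) / (1 + t\<^sup>2)" unfolding d_def by simp
    moreover have "k * c = (k * (1 - t\<^sup>2)) / (1 + t\<^sup>2)" unfolding c_def by simp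
    ultimately show ?thesis by simp
  qed
  define u0 where "u0 = (c * al - d * be, c * be + d * al)"
  have Fu0: "FF al be u0 = c" and Gu0: "GG al be u0 = d"
  proof -
    have "FF al be u0 = c * (al\<^sup>2 + be\<^sup>2)" by (simp add: u0_def FF_def power2_eq_square algebra_simps)
    then show "FF al be u0 = c" using n1 by simp
    have "GG al be u0 = d * (al\<^sup>2 + be\<^sup>2)" by (simp add: u0_def GG_def power2_eq_square algebra_simps)
    then show "GG al be u0 = d" using n1 by simp
  qed
  have Fus: "FF al be ustar = 1" and Gus: "GG al be ustar = 0"
    using n1 by (simp_all add: us FF_def GG_def power2_eq_square)
  have u0S: "u0 \<in> S1"
  proof -
    have "(fst u0)\<^sup>2 + (snd u0)\<^sup>2 = (c\<^sup>2 + d\<^sup>2) * (al\<^sup>2 + be\<^sup>2)"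
      by (simp add: u0_def power2_eq_square algebra_simps)
    then show ?thesis using n1 cd1 by (simp add: S1_def)
  qed
  have u0ne: "u0 \<noteq> ustar" using Gu0 Gus d0 by auto
  have u0ne2: "u0 \<noteq> (- fst ustar, - snd ustar)"
  proof
    assume "u0 = (- fst ustar, - snd ustar)"
    then have "GG al be u0 = 0" using Gus by (simp add: us GG_def)
    then show False using Gu0 d0 by simp
  qed
  have arcFG: "\<exists>s t'. s \<ge> 0 \<and> t' \<ge> 0 \<and> v = (s * fst u0 + t' * fst ustar, s * snd u0 + t' * snd ustar)
       \<and> FF al be v = s * c + t' \<and> GG al be v = s * d" if vin: "v \<in> arc u0 ustar" for v
  proof -
    obtain s t' where st: "s \<ge> 0" "t' \<ge> 0" "v = (s * fst u0 + t' * fst ustar, s * snd u0 + t' * snd ustar)"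
    proof -
      have "v \<in> S1 \<and> (\<exists>s t. s \<ge> 0 \<and> t \<ge> 0 \<and> v = (s * fst u0 + t * fst ustar, s * snd u0 + t * snd ustar))"
        using vin by (simp only: arc_def mem_Collect_eq)
      then show ?thesis using that by (elim conjE exE) blast
    qed
    have "FF al be v = s * FF al be u0 + t' * FF al be ustar" unfolding st(3) by (rule FF_lin)
    then have f: "FF al be v = s * c + t'" using Fu0 Fus by simp
    have "GG al be v = s * GG al be u0 + t' * GG al be ustar" unfolding st(3) by (rule GG_lin)
    then have g: "GG al be v = s * d" using Gu0 Gus by simp
    show ?thesis using st f g by blast
  qed
  have cone2: "v \<in> cone al be (k/2)" if vin: "v \<in> arc u0 ustar" for v
  proof -
    obtain s t' where st: "s \<ge> 0" "t' \<ge> 0" "FF al be v = s * c + t'" "GG al be v = s * d"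
      using arcFG[OF vin] by blast
    have "s * d \<le> s * (k/2 * c)" using dk st(1) by (intro mult_left_mono) auto
    also have "\<dots> \<le> k/2 * (s * c + t')" using st k0 by (simp add: algebra_simps)
    finally show ?thesis using st d0 by (simp add: cone_def)
  qed
  have cone1: "v \<in> cone al be k" if "v \<in> arc u0 ustar" for v
  proof -
    have "v \<in> cone al be (k/2)" using cone2[OF that] .
    then have a: "0 \<le> GG al be v" "GG al be v \<le> k/2 * FF al be v" by (auto simp: cone_def)
    then have "0 \<le> k/2 * FF al be v" by linarith
    then have "FF al be v \<ge> 0" using k0 by (simp add: zero_le_mult_iff)
    then have "k/2 * FF al be v \<le> k * FF al be v" using k0 by (intro mult_right_mono) auto
    then show ?thesis using a unfolding cone_def by simp
  qed
  have ex1: "\<exists>s t. s \<ge> 0 \<and> t \<ge> 0 \<and> u0 = (s * fst u0 + t * fst ustar, s * snd u0 + t * snd ustar)"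
    by (rule exI[of _ 1], rule exI[of _ 0]) simp
  have u0arc: "u0 \<in> arc u0 ustar" unfolding arc_def using u0S ex1 by (intro CollectI conjI)
  have ex2: "\<exists>s t. s \<ge> 0 \<and> t \<ge> 0 \<and> ustar = (s * fst u0 + t * fst ustar, s * snd u0 + t * snd ustar)"
    by (rule exI[of _ 0], rule exI[of _ 1]) simp
  have "ustar \<in> S1" using assms(2) by (simp add: rational_dir_def)
  then have usarc: "ustar \<in> arc u0 ustar" unfolding arc_def using ex2 by (intro CollectI conjI)
  have stab: "arc u0 ustar \<subseteq> stable_set U"
  proof
    fix v assume v: "v \<in> arc u0 ustar"
    have "span U (halfplane v (0,0) \<union> (halfplane v (0,0) \<inter> halfplane v (0,0)))
        = halfplane v (0,0) \<union> (halfplane v (0,0) \<inter> halfplane v (0,0))"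
      using closed_cone[OF n1 k0 hg cone1[OF v] cone1[OF v] cone1[OF v]] .
    then show "v \<in> stable_set U" using v by (simp add: stable_set_def arc_def)
  qed
  have ice: "\<forall>u\<in>arc u0 ustar. \<forall>a b.
          (halfplane u0 a \<inter> halfplane ustar b) - halfplane u (0,0) \<noteq> {} \<longrightarrow>
          span U (halfplane u (0,0) \<union> ((halfplane u0 a \<inter> halfplane ustar b) - halfplane u (0,0)))
            = halfplane u (0,0) \<union> ((halfplane u0 a \<inter> halfplane ustar b) - halfplane u (0,0))"
  proof (intro ballI allI impI)
    fix v a b assume v: "v \<in> arc u0 ustar"
    have e: "halfplane v (0,0) \<union> ((halfplane u0 a \<inter> halfplane ustar b) - halfplane v (0,0))
        = halfplane v (0,0) \<union> (halfplane u0 a \<inter> halfplane ustar b)" by blast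
    show "span U (halfplane v (0,0) \<union> ((halfplane u0 a \<inter> halfplane ustar b) - halfplane v (0,0)))
            = halfplane v (0,0) \<union> ((halfplane u0 a \<inter> halfplane ustar b) - halfplane v (0,0))"
      unfolding e using closed_cone[OF n1 k0 hg cone1[OF v] cone1[OF u0arc] cone1[OF usarc]] .
  qed
  have alph: "\<forall>u\<in>arc u0 ustar. rational_dir u \<longrightarrow> alpha_minus U u = \<infinity>"
  proof (intro ballI impI)
    fix v assume v: "v \<in> arc u0 ustar" and "rational_dir v"
    obtain s t' where st: "s \<ge> 0" "t' \<ge> 0" "v = (s * fst u0 + t' * fst ustar, s * snd u0 + t' * snd ustar)"
      "FF al be v = s * c + t'" "GG al be v = s * d"
      using arcFG[OF v] by blast
    show "alpha_minus U v = \<infinity>"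
    proof (cases "s = 0")
      case True
      then have vt: "v = (t' * al, t' * be)" using st us by simp
      have "(fst v)\<^sup>2 + (snd v)\<^sup>2 = 1" using v by (simp add: arc_def S1_def)
      then have "t'\<^sup>2 * (al\<^sup>2 + be\<^sup>2) = 1" using vt by (simp add: power2_eq_square algebra_simps)
      then have "t'\<^sup>2 = 1" using n1 by simp
      then have "t' = 1" using st(2) by (simp add: power2_eq_1_iff)
      then have "v = ustar" using vt us by simp
      then show ?thesis using assms(4) by simp
    next
      case False
      define P where "P = FF al be v"
      define Q where "Q = GG al be v"
      have Q0: "Q > 0" using False st d0 unfolding Q_def by simp
      have PQ: "2 * Q \<le> k * P" using cone2[OF v] unfolding P_def Q_def cone_def by simp
      have "0 < k * P" using PQ Q0 by linarith
      then have P0: "P > 0" using k0 by (simp add: zero_less_mult_iff)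
      define w where "w = (al - k * be, be + k * al)"
      have Fw: "FF al be w = 1" and Gw: "GG al be w = k"
      proof -
        have "FF al be w = al\<^sup>2 + be\<^sup>2" by (simp add: w_def FF_def power2_eq_square algebra_simps)
        then show "FF al be w = 1" using n1 by simp
        have "GG al be w = k * (al\<^sup>2 + be\<^sup>2)" by (simp add: w_def GG_def power2_eq_square algebra_simps)
        then show "GG al be w = k" using n1 by simp
      qed
      have wc: "w \<in> cone al be k" using Fw Gw k0 by (simp add: cone_def)
      have w0: "w \<noteq> (0,0)" using Fw by (auto simp: FF_def)
      have E: "{Z. finite Z \<and> infinite (span U (halfplane v (0,0) \<union> Z) \<inter> ell_minus v)} = {}"
      proof (rule ccontr)
        assume "\<not> ?thesis"
        then obtain Z where fZ: "finite Z" and inf: "infinite (span U (halfplane v (0,0) \<union> Z) \<inter> ell_minus v)"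
          by blast
        obtain a where a: "\<forall>z\<in>Z. ip z w < ip a w" using exists_far[OF fZ w0] by blast
        let ?A = "halfplane v (0,0) \<union> (halfplane w a \<inter> halfplane w a)"
        have "halfplane v (0,0) \<union> Z \<subseteq> ?A" using a by (auto simp: hp_iff)
        then have "span U (halfplane v (0,0) \<union> Z) \<subseteq> span U ?A" by (rule span_mono)
        also have "\<dots> = ?A" using closed_cone[OF n1 k0 hg cone1[OF v] wc wc] .
        finally have sub: "span U (halfplane v (0,0) \<union> Z) \<inter> ell_minus v \<subseteq> ?A \<inter> ell_minus v" by blast
        define K where "K = ip a w"
        define B where "B = K + K * P / Q"
        have "finite (?A \<inter> ell_minus v)"
        proof (rule bounded_finite[where B = B])
          fix x assume x: "x \<in> ?A \<inter> ell_minus v"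
          let ?Fx = "FF al be (rs x)" and ?Gx = "GG al be (rs x)"
          have i1: "ip x v = 0" and i2: "ip x (- snd v, fst v) \<ge> 0" using x by (auto simp: ell_minus_def)
          have "x \<notin> halfplane v (0,0)" using i1 by (simp add: hp_iff ip_def)
          then have i3: "ip x w < K" using x by (auto simp: hp_iff K_def)
          have e1: "?Fx * P + ?Gx * Q = 0" using i1 ip_FG[OF n1, of x v] by (simp add: P_def Q_def)
          have rot: "FF al be (- snd v, fst v) = - Q" "GG al be (- snd v, fst v) = P"
            by (simp_all add: P_def Q_def FF_def GG_def algebra_simps)
          have e2: "?Gx * P - ?Fx * Q \<ge> 0" using i2 ip_FG[OF n1, of x "(- snd v, fst v)"] rot by simp
          have e3: "?Fx + k * ?Gx < K" using i3 ip_FG[OF n1, of x w] Fw Gw by (simp add: algebra_simps)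
          have bd: "\<bar>?Fx\<bar> \<le> K \<and> \<bar>?Gx\<bar> \<le> K * P / Q" using bound_line[OF P0 Q0 PQ e1 e2 e3] .
          have cx: "real_of_int (fst x) = al * ?Fx - be * ?Gx" "real_of_int (snd x) = be * ?Fx + al * ?Gx"
            using coord_FG[OF n1, of "rs x"] by (simp_all add: rs_def)
          have ab: "\<bar>al\<bar> \<le> 1" "\<bar>be\<bar> \<le> 1" using abs_le1[OF n1] by auto
          have m1: "\<bar>al * ?Fx\<bar> \<le> \<bar>?Fx\<bar>" "\<bar>be * ?Gx\<bar> \<le> \<bar>?Gx\<bar>" "\<bar>be * ?Fx\<bar> \<le> \<bar>?Fx\<bar>" "\<bar>al * ?Gx\<bar> \<le> \<bar>?Gx\<bar>"
            using ab by (simp_all add: abs_mult mult_left_le_one_le)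
          show "\<bar>real_of_int (fst x)\<bar> \<le> B \<and> \<bar>real_of_int (snd x)\<bar> \<le> B"
            unfolding cx B_def using m1 bd abs_triangle_ineq4[of "al * ?Fx" "be * ?Gx"]
              abs_triangle_ineq[of "be * ?Fx" "al * ?Gx"] by linarith
        qed
        then show False using inf sub finite_subset by blast
      qed
      show ?thesis unfolding alpha_minus_def E by (simp add: top_enat_def)
    qed
  qed
  show ?thesis using u0S u0ne u0ne2 stab alph ice by blast
qed

end
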